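(* Let $f:\mathcal{Y}\to\mathbb{R}$ be measurable with $f(X)$ bounded, and $d\ge2$. Then pointwise \[ \big|\mathfrak{h}^+\,|\mathfrak{h}^{(d-1)}f(X)|_{\mathrm{op}}\big|\le|\mathfrak{h}^{(d)}f(X)|_{\mathrm{op}}. \]
   Context: $X=(X_1,\dots,X_n)$ is a random vector in $\mathcal{Y}=\mathcal{X}_1\times\cdots\times\mathcal{X}_n$ and $X'$ an independent copy. $T_iF(X)$ is $F(X)$ with $X_i$ replaced by $X_i'$, $T_{i_1\dots i_k}=T_{i_1}\circ\cdots\circ T_{i_k}$. For distinct $i_1,\dots,i_k$, $\mathfrak{h}_{i_1\dots i_k}f(X)=\|\prod_{s=1}^k(\mathrm{Id}-T_{i_s})f(X)\|_{i_1,\dots,i_k,\infty}$ ($L^\infty$-norm with respect to $X_{i_1},\dots,X_{i_k},X'_{i_1},\dots,X'_{i_k}$); $\mathfrak{h}^{(k)}f$ is the $k$-tensor with these entries on distinct indices and $0$ elsewhere; $|A|_{\mathrm{op}}=\sup_{|v^j|\le1}\sum v^1_{i_1}\cdots v^k_{i_k}A_{i_1\dots i_k}$. For a bounded function $G=G(X)$, $\mathfrak{h}_i^+G(X)=\|(G(X)-T_iG(X))_+\|_{X_i',\infty}$ ($L^\infty$-norm w.r.t. $X_i'$ only) and $|\mathfrak{h}^+G|=(\sum_{i=1}^n(\mathfrak{h}_i^+G)^2)^{1/2}$. *)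

theory Defs
  imports "HOL-Probability.Probability"
begin

text \<open>Coordinates are indexed by 0..n-1; all X_i take values in a common type 'a,
  X_i has law M i, and X has law PiM {..<n} M (independent coordinates).\<close>

definition repl :: "nat set \<Rightarrow> (nat \<Rightarrow> 'a) \<Rightarrow> (nat \<Rightarrow> 'a) \<Rightarrow> nat \<Rightarrow> 'a" where
  "repl A x y = (\<lambda>j. if j \<in> A then y j else x j)"

text \<open>prod_{i in I} (Id - T_i) f, evaluated at (x, x').\<close>
definition diff_op :: "nat set \<Rightarrow> ((nat \<Rightarrow> 'a) \<Rightarrow> real) \<Rightarrow> (nat \<Rightarrow> 'a) \<Rightarrow> (nat \<Rightarrow> 'a) \<Rightarrow> real" where
  "diff_op I f x y = (\<Sum>A\<in>Pow I. (-1) ^ card A * f (repl A x y))"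

definition Linf :: "'b measure \<Rightarrow> ('b \<Rightarrow> real) \<Rightarrow> real" where
  "Linf N g = real_of_ereal (esssup N (\<lambda>z. ereal \<bar>g z\<bar>))"

text \<open>h_I f (x): L-infinity norm w.r.t. (X_i, X'_i), i in I, the other coordinates fixed by x.\<close>
definition hdiff :: "(nat \<Rightarrow> 'a measure) \<Rightarrow> nat set \<Rightarrow> ((nat \<Rightarrow> 'a) \<Rightarrow> real) \<Rightarrow> (nat \<Rightarrow> 'a) \<Rightarrow> real" where
  "hdiff M I f x = Linf (PiM I (\<lambda>i. M i \<Otimes>\<^sub>M M i))
     (\<lambda>z. diff_op I f (repl I x (\<lambda>j. fst (z j))) (\<lambda>j. snd (z j)))"

text \<open>The k-tensor h^(k) f (x), indexed by maps {..<k} -> {..<n}; zero off distinct indices.\<close>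
definition htensor :: "(nat \<Rightarrow> 'a measure) \<Rightarrow> nat \<Rightarrow> ((nat \<Rightarrow> 'a) \<Rightarrow> real) \<Rightarrow> (nat \<Rightarrow> 'a) \<Rightarrow> (nat \<Rightarrow> nat) \<Rightarrow> real" where
  "htensor M k f x \<iota> = (if inj_on \<iota> {..<k} then hdiff M (\<iota> ` {..<k}) f x else 0)"

definition opnorm :: "nat \<Rightarrow> nat \<Rightarrow> ((nat \<Rightarrow> nat) \<Rightarrow> real) \<Rightarrow> real" where
  "opnorm n k A = Sup {(\<Sum>\<iota>\<in>PiE {..<k} (\<lambda>_. {..<n}). (\<Prod>j<k. v j (\<iota> j)) * A \<iota>) | v.
       \<forall>j<k. (\<Sum>i<n. (v j i)\<^sup>2) \<le> 1}"

definition hplus :: "(nat \<Rightarrow> 'a measure) \<Rightarrow> nat \<Rightarrow> ((nat \<Rightarrow> 'a) \<Rightarrow> real) \<Rightarrow> (nat \<Rightarrow> 'a) \<Rightarrow> real" where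
  "hplus M i G x = Linf (M i) (\<lambda>y. max 0 (G x - G (x(i := y))))"

definition hplus_norm :: "(nat \<Rightarrow> 'a measure) \<Rightarrow> nat \<Rightarrow> ((nat \<Rightarrow> 'a) \<Rightarrow> real) \<Rightarrow> (nat \<Rightarrow> 'a) \<Rightarrow> real" where
  "hplus_norm M n G x = sqrt (\<Sum>i<n. (hplus M i G x)\<^sup>2)"

end

theory Submission
  imports Defs
begin


lemma Linf_le:
  assumes "0 \<le> c" "AE z in N. \<bar>g z\<bar> \<le> c"
  shows "Linf N g \<le> c"
proof (cases "(\<lambda>z. ereal \<bar>g z\<bar>) \<in> borel_measurable N")
  case True
  have "esssup N (\<lambda>z. ereal \<bar>g z\<bar>) \<le> ereal c"
    using assms(2) by (intro esssup_I[OF True]) auto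
  then show ?thesis using assms(1) unfolding Linf_def
    by (cases "esssup N (\<lambda>z. ereal \<bar>g z\<bar>)") auto
next
  case False
  then show ?thesis using assms(1) unfolding Linf_def by (simp add: esssup_non_measurable top_ereal_def)
qed

lemma esssup_nonneg_prob:
  assumes "prob_space N" "(\<lambda>z. ereal \<bar>g z\<bar>) \<in> borel_measurable N"
  shows "0 \<le> esssup N (\<lambda>z. ereal \<bar>g z\<bar>)"
proof (rule ccontr)
  interpret prob_space N by fact
  assume "\<not> 0 \<le> esssup N (\<lambda>z. ereal \<bar>g z\<bar>)"
  then have lt: "esssup N (\<lambda>z. ereal \<bar>g z\<bar>) < 0" by auto
  have "AE z in N. ereal \<bar>g z\<bar> \<le> esssup N (\<lambda>z. ereal \<bar>g z\<bar>)" by (rule esssup_AE)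
  then have "AE z in N. False"
    by eventually_elim (use lt in \<open>metis abs_ge_zero ereal_less_eq(5) leD order.strict_trans2\<close>)
  then show False by (simp add: AE_False)
qed

lemma Linf_nonneg:
  assumes "prob_space N"
  shows "0 \<le> Linf N g"
proof (cases "(\<lambda>z. ereal \<bar>g z\<bar>) \<in> borel_measurable N")
  case True
  show ?thesis using esssup_nonneg_prob[OF assms True] unfolding Linf_def
    by (cases "esssup N (\<lambda>z. ereal \<bar>g z\<bar>)") auto
next
  case False
  then show ?thesis unfolding Linf_def by (simp add: esssup_non_measurable top_ereal_def)
qed

lemma Linf_AE:
  assumes "prob_space N" "(\<lambda>z. ereal \<bar>g z\<bar>) \<in> borel_measurable N"
    and "AE z in N. \<bar>g z\<bar> \<le> B"
  shows "AE z in N. \<bar>g z\<bar> \<le> Linf N g"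
proof -
  have le: "esssup N (\<lambda>z. ereal \<bar>g z\<bar>) \<le> ereal B"
    using assms(3) by (intro esssup_I[OF assms(2)]) auto
  have ge: "0 \<le> esssup N (\<lambda>z. ereal \<bar>g z\<bar>)" by (rule esssup_nonneg_prob[OF assms(1,2)])
  have eq: "esssup N (\<lambda>z. ereal \<bar>g z\<bar>) = ereal (Linf N g)"
    unfolding Linf_def using le ge by (cases "esssup N (\<lambda>z. ereal \<bar>g z\<bar>)") auto
  have "AE z in N. ereal \<bar>g z\<bar> \<le> esssup N (\<lambda>z. ereal \<bar>g z\<bar>)" by (rule esssup_AE)
  then show ?thesis unfolding eq by eventually_elim simp
qed

lemma sets_AE:
  assumes "sigma_finite_measure Y"
    and S: "{p \<in> space (X \<Otimes>\<^sub>M Y). \<Phi> (fst p) (snd p)} \<in> sets (X \<Otimes>\<^sub>M Y)"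
  shows "{x \<in> space X. AE y in Y. \<Phi> x y} \<in> sets X"
proof -
  interpret sigma_finite_measure Y by fact
  define S' where "S' = {p \<in> space (X \<Otimes>\<^sub>M Y). \<not> \<Phi> (fst p) (snd p)}"
  have S': "S' \<in> sets (X \<Otimes>\<^sub>M Y)"
  proof -
    have "S' = space (X \<Otimes>\<^sub>M Y) - {p \<in> space (X \<Otimes>\<^sub>M Y). \<Phi> (fst p) (snd p)}"
      unfolding S'_def by auto
    then show ?thesis using S by auto
  qed
  have eq: "{x \<in> space X. AE y in Y. \<Phi> x y} = {x \<in> space X. emeasure Y (Pair x -` S') = 0}"
  proof (intro Collect_cong conj_cong refl)
    fix x assume x: "x \<in> space X"
    have sec: "Pair x -` S' \<in> sets Y" using S' by (rule sets_Pair1)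
    have "{y \<in> space Y. \<not> \<Phi> x y} = Pair x -` S'"
      using x unfolding S'_def by (auto simp: space_pair_measure)
    then show "(AE y in Y. \<Phi> x y) = (emeasure Y (Pair x -` S') = 0)"
      using AE_iff_measurable[OF sec] by blast
  qed
  have "(\<lambda>x. emeasure Y (Pair x -` S')) \<in> borel_measurable X"
    using measurable_emeasure_Pair[OF S'] .
  then show ?thesis unfolding eq by measurable
qed

locale L3 =
  fixes M :: "nat \<Rightarrow> 'a measure" and n :: nat and f :: "(nat \<Rightarrow> 'a) \<Rightarrow> real" and C :: real
  assumes prob: "\<And>i. i < n \<Longrightarrow> prob_space (M i)"
    and fmeas[measurable]: "f \<in> borel_measurable (PiM {..<n} M)"
    and fbound: "AE x in PiM {..<n} M. \<bar>f x\<bar> \<le> C"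
    and Cpos: "0 \<le> C"
begin

abbreviation "P \<equiv> PiM {..<n} M"
abbreviation "Q J \<equiv> PiM J (\<lambda>j. M j \<Otimes>\<^sub>M M j)"
definition g where "g J x z = diff_op J f (repl J x (\<lambda>j. fst (z j))) (\<lambda>j. snd (z j))"

lemma hdiff_eq: "hdiff M J f x = Linf (Q J) (g J x)"
  unfolding hdiff_def g_def ..

lemma repl_meas:
  assumes "A \<subseteq> J" "J \<subseteq> {..<n}"
  shows "(\<lambda>p. repl A (repl J (fst p) (\<lambda>j. fst (snd p j))) (\<lambda>j. snd (snd p j))) \<in> P \<Otimes>\<^sub>M Q J \<rightarrow>\<^sub>M P"
proof (rule measurable_PiM_single')
  fix j assume j: "j \<in> {..<n}"
  show "(\<lambda>p. repl A (repl J (fst p) (\<lambda>j. fst (snd p j))) (\<lambda>j. snd (snd p j)) j) \<in> P \<Otimes>\<^sub>M Q J \<rightarrow>\<^sub>M M j"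
  proof (cases "j \<in> A")
    case True
    then have jJ: "j \<in> J" using assms by auto
    have e: "(\<lambda>p. repl A (repl J (fst p) (\<lambda>j. fst (snd p j))) (\<lambda>j. snd (snd p j)) j) = (\<lambda>p. snd (snd p j))"
      using True by (simp add: repl_def)
    show ?thesis unfolding e
      by (rule measurable_compose[OF measurable_compose[OF measurable_snd measurable_component_singleton[OF jJ]] measurable_snd])
  next
    case False
    show ?thesis
    proof (cases "j \<in> J")
      case True
      have e: "(\<lambda>p. repl A (repl J (fst p) (\<lambda>j. fst (snd p j))) (\<lambda>j. snd (snd p j)) j) = (\<lambda>p. fst (snd p j))"
        using True False by (simp add: repl_def)
      show ?thesis unfolding e
        by (rule measurable_compose[OF measurable_compose[OF measurable_snd measurable_component_singleton[OF True]] measurable_fst])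
    next
      case False2: False
      have e: "(\<lambda>p. repl A (repl J (fst p) (\<lambda>j. fst (snd p j))) (\<lambda>j. snd (snd p j)) j) = (\<lambda>p. fst p j)"
        using False2 False by (simp add: repl_def)
      show ?thesis unfolding e
        by (rule measurable_compose[OF measurable_fst measurable_component_singleton[OF j]])
    qed
  qed
next
  show "(\<lambda>p. repl A (repl J (fst p) (\<lambda>j. fst (snd p j))) (\<lambda>j. snd (snd p j))) \<in> space (P \<Otimes>\<^sub>M Q J) \<rightarrow> (\<Pi>\<^sub>E i\<in>{..<n}. space (M i))"
  proof
  fix p assume "p \<in> space (P \<Otimes>\<^sub>M Q J)"
  then show "repl A (repl J (fst p) (\<lambda>j. fst (snd p j))) (\<lambda>j. snd (snd p j)) \<in> (\<Pi>\<^sub>E i\<in>{..<n}. space (M i))"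
    using assms by (auto simp: space_pair_measure space_PiM PiE_iff repl_def extensional_def mem_Times_iff)
  qed
qed

lemma probP: "prob_space P"
  by (intro prob_space_PiM prob) auto

lemma probQ: "J \<subseteq> {..<n} \<Longrightarrow> prob_space (Q J)"
  by (intro prob_space_PiM prob_space_pair prob) auto

lemma finJ: "J \<subseteq> {..<n} \<Longrightarrow> finite J"
  using finite_subset by blast

lemma g_meas:
  assumes J: "J \<subseteq> {..<n}"
  shows "(\<lambda>p. g J (fst p) (snd p)) \<in> borel_measurable (P \<Otimes>\<^sub>M Q J)"
  unfolding g_def diff_op_def
proof (rule borel_measurable_sum)
  fix A assume "A \<in> Pow J"
  then have "A \<subseteq> J" by auto
  from measurable_compose[OF repl_meas[OF this J] fmeas]
  show "(\<lambda>p. (-1) ^ card A * f (repl A (repl J (fst p) (\<lambda>j. fst (snd p j))) (\<lambda>j. snd (snd p j)))) \<in> borel_measurable (P \<Otimes>\<^sub>M Q J)"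
    by measurable
qed

lemma g_meas_x:
  assumes J: "J \<subseteq> {..<n}" and x: "x \<in> space P"
  shows "g J x \<in> borel_measurable (Q J)"
proof -
  have "(\<lambda>z. (x, z)) \<in> Q J \<rightarrow>\<^sub>M P \<Otimes>\<^sub>M Q J"
    using x by (intro measurable_Pair measurable_const measurable_ident) auto
  from measurable_compose[OF this g_meas[OF J]] show ?thesis by simp
qed


lemma sfQ: "J \<subseteq> {..<n} \<Longrightarrow> sigma_finite_measure (Q J)"
  by (rule prob_space_imp_sigma_finite[OF probQ])

lemma sfP: "sigma_finite_measure P"
  by (rule prob_space_imp_sigma_finite[OF probP])

lemma hdiff_meas:
  assumes J: "J \<subseteq> {..<n}"
  shows "(\<lambda>x. hdiff M J f x) \<in> borel_measurable P"
proof -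
  define E where "E x = esssup (Q J) (\<lambda>z. ereal \<bar>g J x z\<bar>)" for x
  have gm[measurable]: "(\<lambda>p. g J (fst p) (snd p)) \<in> borel_measurable (P \<Otimes>\<^sub>M Q J)"
    by (rule g_meas[OF J])
  have "E \<in> borel_measurable P"
  proof (rule borel_measurableI_le)
    fix y
    have "{x \<in> space P. E x \<le> y} = {x \<in> space P. AE z in Q J. ereal \<bar>g J x z\<bar> \<le> y}"
    proof (intro Collect_cong conj_cong refl)
      fix x assume x: "x \<in> space P"
      have m: "(\<lambda>z. ereal \<bar>g J x z\<bar>) \<in> borel_measurable (Q J)"
        using g_meas_x[OF J x] by measurable
      show "(E x \<le> y) = (AE z in Q J. ereal \<bar>g J x z\<bar> \<le> y)"
      proof
        assume "E x \<le> y"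
        with esssup_AE[of "\<lambda>z. ereal \<bar>g J x z\<bar>" "Q J"] show "AE z in Q J. ereal \<bar>g J x z\<bar> \<le> y"
          unfolding E_def by (auto elim: eventually_mono)
      next
        assume "AE z in Q J. ereal \<bar>g J x z\<bar> \<le> y"
        then show "E x \<le> y" unfolding E_def by (rule esssup_I[OF m])
      qed
    qed
    also have "\<dots> \<in> sets P"
      by (rule sets_AE[OF sfQ[OF J]]) measurable
    finally show "{x \<in> space P. E x \<le> y} \<in> sets P" .
  qed
  then have "(\<lambda>x. real_of_ereal (E x)) \<in> borel_measurable P" by measurable
  moreover have "(\<lambda>x. hdiff M J f x) = (\<lambda>x. real_of_ereal (E x))"
    by (simp add: hdiff_eq Linf_def E_def)
  ultimately show ?thesis by simp
qed

definition T where "T A J p = repl A (repl J (fst p) (\<lambda>j. fst (snd p j))) (\<lambda>j. snd (snd p j))"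

lemma D4:
  assumes AJ: "A \<subseteq> J" and J: "J \<subseteq> {..<n}"
  shows "distr (P \<Otimes>\<^sub>M Q J) P (T A J) = P"
proof -
  have Tm: "T A J \<in> P \<Otimes>\<^sub>M Q J \<rightarrow>\<^sub>M P"
    unfolding T_def by (rule repl_meas[OF AJ J])
  interpret PQ: pair_sigma_finite P "Q J"
    by (simp add: pair_sigma_finite_def sfP sfQ[OF J])
  have pr: "\<And>j. j \<in> {..<n} \<Longrightarrow> prob_space (M j)" using prob by auto
  show ?thesis
  proof (rule measure_eqI_PiM_infinite[symmetric])
    show "sets P = sets (Pi\<^sub>M {..<n} M)" by simp
    show "sets (distr (P \<Otimes>\<^sub>M Q J) P (T A J)) = sets (Pi\<^sub>M {..<n} M)" by simp
    show "finite_measure P" using probP by (simp add: prob_space_def)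
    fix B K assume K: "finite K" "K \<subseteq> {..<n}" and B: "\<And>i. i \<in> K \<Longrightarrow> B i \<in> sets (M i)"
    define B2 where "B2 j = (if j \<in> A then space (M j) \<times> B j else B j \<times> space (M j))" for j
    have B2s: "\<And>j. j \<in> K \<inter> J \<Longrightarrow> B2 j \<in> sets (M j \<Otimes>\<^sub>M M j)"
      using B by (auto simp: B2_def)
    have pre: "T A J -` prod_emb {..<n} M K (Pi\<^sub>E K B) \<inter> space (P \<Otimes>\<^sub>M Q J)
       = prod_emb {..<n} M (K - J) (Pi\<^sub>E (K - J) B) \<times> prod_emb J (\<lambda>j. M j \<Otimes>\<^sub>M M j) (K \<inter> J) (Pi\<^sub>E (K \<inter> J) B2)"
      using AJ J K
      by (auto simp: T_def repl_def prod_emb_def space_pair_measure space_PiM PiE_iff B2_def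
                     extensional_def mem_Times_iff split: if_splits; blast)
    have m1: "prod_emb {..<n} M (K - J) (Pi\<^sub>E (K - J) B) \<in> sets P"
      using K B by (intro sets_PiM_I) auto
    have m2: "prod_emb J (\<lambda>j. M j \<Otimes>\<^sub>M M j) (K \<inter> J) (Pi\<^sub>E (K \<inter> J) B2) \<in> sets (Q J)"
      using K B2s by (intro sets_PiM_I) auto
    have e1: "emeasure P (prod_emb {..<n} M (K - J) (Pi\<^sub>E (K - J) B)) = (\<Prod>j\<in>K - J. emeasure (M j) (B j))"
      using K B by (intro emeasure_PiM_emb pr) auto
    have e2: "emeasure (Q J) (prod_emb J (\<lambda>j. M j \<Otimes>\<^sub>M M j) (K \<inter> J) (Pi\<^sub>E (K \<inter> J) B2))
         = (\<Prod>j\<in>K \<inter> J. emeasure (M j \<Otimes>\<^sub>M M j) (B2 j))"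
      using K B2s J by (intro emeasure_PiM_emb prob_space_pair prob) auto
    have e3: "emeasure (M j \<Otimes>\<^sub>M M j) (B2 j) = emeasure (M j) (B j)" if j: "j \<in> K \<inter> J" for j
    proof -
      interpret Mj: prob_space "M j" using prob j K by auto
      show ?thesis using B j
        by (auto simp: B2_def Mj.emeasure_pair_measure_Times Mj.emeasure_space_1 prob_space_imp_sigma_finite)
    qed
    have "emeasure (distr (P \<Otimes>\<^sub>M Q J) P (T A J)) (prod_emb {..<n} M K (Pi\<^sub>E K B))
        = emeasure (P \<Otimes>\<^sub>M Q J) (T A J -` prod_emb {..<n} M K (Pi\<^sub>E K B) \<inter> space (P \<Otimes>\<^sub>M Q J))"
      using K B by (intro emeasure_distr Tm sets_PiM_I) auto
    also have "\<dots> = (\<Prod>j\<in>K - J. emeasure (M j) (B j)) * (\<Prod>j\<in>K \<inter> J. emeasure (M j) (B j))"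
      unfolding pre sigma_finite_measure.emeasure_pair_measure_Times[OF sfQ[OF J] m1 m2] e1 e2 using e3 by simp
    also have "\<dots> = (\<Prod>j\<in>K. emeasure (M j) (B j))"
    proof -
      have "K = (K - J) \<union> (K \<inter> J)" by auto
      then show ?thesis using K by (metis (no_types) Diff_disjoint Int_Diff_disjoint finite_Diff finite_Int inf_commute prod.union_disjoint)
    qed
    also have "\<dots> = emeasure P (prod_emb {..<n} M K (Pi\<^sub>E K B))"
      using K B by (intro emeasure_PiM_emb[symmetric] pr) auto
    finally show "emeasure P (prod_emb {..<n} M K (Pi\<^sub>E K B)) = emeasure (distr (P \<Otimes>\<^sub>M Q J) P (T A J)) (prod_emb {..<n} M K (Pi\<^sub>E K B))"
      by simp
  qed
qed



end

context L3 begin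
lemma good_AE:
  assumes J: "J \<subseteq> {..<n}"
  shows "AE x in P. AE z in Q J. \<bar>g J x z\<bar> \<le> 2 ^ card J * C"
proof -
  interpret PQ: pair_sigma_finite P "Q J"
    by (simp add: pair_sigma_finite_def sfP sfQ[OF J])
  have "\<forall>A\<in>Pow J. AE p in P \<Otimes>\<^sub>M Q J. \<bar>f (T A J p)\<bar> \<le> C"
  proof
    fix A assume "A \<in> Pow J"
    then have A: "A \<subseteq> J" by auto
    have Tm: "T A J \<in> P \<Otimes>\<^sub>M Q J \<rightarrow>\<^sub>M P"
      unfolding T_def by (rule repl_meas[OF A J])
    have "AE x in distr (P \<Otimes>\<^sub>M Q J) P (T A J). \<bar>f x\<bar> \<le> C"
      unfolding D4[OF A J] by (rule fbound)
    then show "AE p in P \<Otimes>\<^sub>M Q J. \<bar>f (T A J p)\<bar> \<le> C"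
      by (rule AE_distrD[OF Tm])
  qed
  then have "AE p in P \<Otimes>\<^sub>M Q J. \<forall>A\<in>Pow J. \<bar>f (T A J p)\<bar> \<le> C"
    using finJ[OF J] by (intro AE_finite_allI) auto
  then have "AE x in P. AE z in Q J. \<forall>A\<in>Pow J. \<bar>f (T A J (x, z))\<bar> \<le> C"
    by (rule PQ.AE_pair)
  then show ?thesis
  proof (rule AE_mp[OF _ AE_I2], intro impI)
    fix x assume x: "AE z in Q J. \<forall>A\<in>Pow J. \<bar>f (T A J (x, z))\<bar> \<le> C"
    show "AE z in Q J. \<bar>g J x z\<bar> \<le> 2 ^ card J * C"
      using x
    proof eventually_elim
      case (elim z)
      have "\<bar>g J x z\<bar> = \<bar>\<Sum>A\<in>Pow J. (-1) ^ card A * f (T A J (x, z))\<bar>"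
        by (simp add: g_def diff_op_def T_def)
      also have "\<dots> \<le> (\<Sum>A\<in>Pow J. \<bar>(-1) ^ card A * f (T A J (x, z))\<bar>)"
        by (rule sum_abs)
      also have "\<dots> \<le> of_nat (card (Pow J)) * C"
        using elim by (intro sum_bounded_above) (simp add: abs_mult)
      also have "\<dots> = 2 ^ card J * C"
        using finJ[OF J] by (simp add: card_Pow)
      finally show ?case .
    qed
  qed
qed

definition Mp where "Mp i = (\<lambda>j. if j = n then M i else M j)"
abbreviation "Pp i \<equiv> PiM {..<Suc n} (Mp i)"

context
  fixes i assumes i: "i < n"
begin

lemma probMi: "prob_space (M i)" using prob i .

lemma sfMi: "sigma_finite_measure (M i)" by (rule prob_space_imp_sigma_finite[OF probMi])

lemma PiM_Mp: "PiM {..<n} (Mp i) = P"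
  by (intro PiM_cong) (auto simp: Mp_def)

lemma probMp: "j \<in> {..<Suc n} \<Longrightarrow> prob_space (Mp i j)"
  using prob i by (auto simp: Mp_def)

lemma iota_meas: "(\<lambda>(x, y). x(n := y)) \<in> P \<Otimes>\<^sub>M M i \<rightarrow>\<^sub>M Pp i"
proof -
  have "(\<lambda>p. (fst p)(n := snd p)) \<in> P \<Otimes>\<^sub>M M i \<rightarrow>\<^sub>M Pp i"
  proof (rule measurable_fun_upd[where J="{..<n}"])
    show "{..<Suc n} = {..<n} \<union> {n}" by auto
    show "fst \<in> P \<Otimes>\<^sub>M M i \<rightarrow>\<^sub>M Pi\<^sub>M {..<n} (Mp i)" unfolding PiM_Mp by measurable
    show "snd \<in> P \<Otimes>\<^sub>M M i \<rightarrow>\<^sub>M Mp i n" by (simp add: Mp_def)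
  qed
  then show ?thesis by (simp add: case_prod_beta')
qed

lemma iota_distr: "distr (P \<Otimes>\<^sub>M M i) (Pp i) (\<lambda>(x, y). x(n := y)) = Pp i"
proof -
  interpret PM: pair_sigma_finite "M i" P
    by (simp add: pair_sigma_finite_def sfP sfMi)
  have lib: "distr (Mp i n \<Otimes>\<^sub>M PiM {..<n} (Mp i)) (PiM (insert n {..<n}) (Mp i)) (\<lambda>(x, X). X(n := x)) = PiM (insert n {..<n}) (Mp i)"
    using probMp by (intro distr_pair_PiM_eq_PiM) auto
  have ins: "insert n {..<n} = {..<Suc n}" by auto
  have lib': "distr (M i \<Otimes>\<^sub>M P) (Pp i) (\<lambda>(x, X). X(n := x)) = Pp i"
    using lib unfolding ins PiM_Mp by (simp add: Mp_def)
  have m2: "(\<lambda>(x, X). X(n := x)) \<in> M i \<Otimes>\<^sub>M P \<rightarrow>\<^sub>M Pp i"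
  proof -
    have "(\<lambda>p. (snd p)(n := fst p)) \<in> M i \<Otimes>\<^sub>M P \<rightarrow>\<^sub>M Pp i"
    proof (rule measurable_fun_upd[where J="{..<n}"])
      show "{..<Suc n} = {..<n} \<union> {n}" by auto
      show "snd \<in> M i \<Otimes>\<^sub>M P \<rightarrow>\<^sub>M Pi\<^sub>M {..<n} (Mp i)" unfolding PiM_Mp by measurable
      show "fst \<in> M i \<Otimes>\<^sub>M P \<rightarrow>\<^sub>M Mp i n" by (simp add: Mp_def)
    qed
    then show ?thesis by (simp add: case_prod_beta')
  qed
  have sw: "(\<lambda>(x, y). (y, x)) \<in> P \<Otimes>\<^sub>M M i \<rightarrow>\<^sub>M M i \<Otimes>\<^sub>M P" by measurable
  have "Pp i = distr (distr (P \<Otimes>\<^sub>M M i) (M i \<Otimes>\<^sub>M P) (\<lambda>(x, y). (y, x))) (Pp i) (\<lambda>(x, X). X(n := x))"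
    using lib' PM.distr_pair_swap by metis
  also have "\<dots> = distr (P \<Otimes>\<^sub>M M i) (Pp i) ((\<lambda>(x, X). X(n := x)) \<circ> (\<lambda>(x, y). (y, x)))"
    by (rule distr_distr[OF m2 sw])
  also have "\<dots> = distr (P \<Otimes>\<^sub>M M i) (Pp i) (\<lambda>(x, y). x(n := y))"
    by (rule distr_cong) auto
  finally show ?thesis by simp
qed

abbreviation "tau' \<equiv> (\<lambda>w. \<lambda>j\<in>{..<n}. w (if j = i then n else j))"

lemma tau'_meas: "tau' \<in> Pp i \<rightarrow>\<^sub>M P"
proof -
  have "tau' \<in> Pp i \<rightarrow>\<^sub>M PiM {..<n} (\<lambda>j. Mp i (if j = i then n else j))"
    by (rule measurable_restrict, rule measurable_component_singleton) auto
  moreover have "PiM {..<n} (\<lambda>j. Mp i (if j = i then n else j)) = P"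
    by (intro PiM_cong) (auto simp: Mp_def)
  ultimately show ?thesis by simp
qed

lemma tau'_distr: "distr (Pp i) P tau' = P"
proof -
  have "distr (Pp i) (PiM {..<n} (\<lambda>j. Mp i (if j = i then n else j))) tau' = PiM {..<n} (\<lambda>j. Mp i (if j = i then n else j))"
    using probMp i by (intro distr_PiM_reindex[where f="\<lambda>j. if j = i then n else j"]) (auto simp: inj_on_def)
  moreover have "PiM {..<n} (\<lambda>j. Mp i (if j = i then n else j)) = P"
    by (intro PiM_cong) (auto simp: Mp_def)
  ultimately show ?thesis by simp
qed

lemma tau_meas: "(\<lambda>(x, y). x(i := y)) \<in> P \<Otimes>\<^sub>M M i \<rightarrow>\<^sub>M P"
proof -
  have "(\<lambda>p. (fst p)(i := snd p)) \<in> P \<Otimes>\<^sub>M M i \<rightarrow>\<^sub>M PiM {..<n} M"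
  proof (rule measurable_fun_upd[where J="{..<n}"])
    show "{..<n} = {..<n} \<union> {i}" using i by auto
  qed measurable
  then show ?thesis by (simp add: case_prod_beta')
qed

lemma D2: "distr (P \<Otimes>\<^sub>M M i) P (\<lambda>(x, y). x(i := y)) = P"
proof -
  have "P = distr (distr (P \<Otimes>\<^sub>M M i) (Pp i) (\<lambda>(x, y). x(n := y))) P tau'"
    unfolding iota_distr tau'_distr ..
  also have "\<dots> = distr (P \<Otimes>\<^sub>M M i) P (tau' \<circ> (\<lambda>(x, y). x(n := y)))"
    by (rule distr_distr[OF tau'_meas iota_meas])
  also have "\<dots> = distr (P \<Otimes>\<^sub>M M i) P (\<lambda>(x, y). x(i := y))"
  proof (rule distr_cong)
    fix p assume "p \<in> space (P \<Otimes>\<^sub>M M i)"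
    then obtain x y where p: "p = (x, y)" and x: "x \<in> space P"
      by (auto simp: space_pair_measure)
    have ex: "x \<in> extensional {..<n}" using x by (simp add: space_PiM PiE_iff)
    have "(\<lambda>j\<in>{..<n}. (x(n := y)) (if j = i then n else j)) = x(i := y)"
    proof
      fix j show "(\<lambda>j\<in>{..<n}. (x(n := y)) (if j = i then n else j)) j = (x(i := y)) j"
        using ex i by (cases "j < n") (auto simp: extensional_def)
    qed
    then show "(tau' \<circ> (\<lambda>(x, y). x(n := y))) p = (\<lambda>(x, y). x(i := y)) p"
      by (simp add: p)
  qed auto
  finally show ?thesis by simp
qed

end

end


lemma repl_insert: "repl (insert i A) a b = repl A (a(i := b i)) b"
  by (auto simp: repl_def fun_eq_iff)

lemma diff_op_insert:
  assumes "finite J" "i \<notin> J"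
  shows "diff_op (insert i J) f a b = diff_op J f a b - diff_op J f (a(i := b i)) b"
proof -
  have disj: "Pow J \<inter> insert i ` Pow J = {}" using assms(2) by auto
  have inj: "inj_on (insert i) (Pow J)"
    using assms(2) by (auto simp: inj_on_def)
  have "diff_op (insert i J) f a b = (\<Sum>A\<in>Pow J. (-1) ^ card A * f (repl A a b)) + (\<Sum>A\<in>insert i ` Pow J. (-1) ^ card A * f (repl A a b))"
    unfolding diff_op_def Pow_insert using assms(1) disj by (intro sum.union_disjoint) auto
  also have "(\<Sum>A\<in>insert i ` Pow J. (-1) ^ card A * f (repl A a b)) = (\<Sum>A\<in>Pow J. (-1) ^ card (insert i A) * f (repl (insert i A) a b))"
    by (rule sum.reindex[OF inj, unfolded comp_def])
  also have "\<dots> = (\<Sum>A\<in>Pow J. - ((-1) ^ card A * f (repl A (a(i := b i)) b)))"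
  proof (rule sum.cong[OF refl])
    fix A assume A: "A \<in> Pow J"
    then have "finite A" "i \<notin> A" using assms finite_subset by auto
    then show "(-1) ^ card (insert i A) * f (repl (insert i A) a b) = - ((-1) ^ card A * f (repl A (a(i := b i)) b))"
      by (simp add: repl_insert)
  qed
  finally show ?thesis by (simp add: diff_op_def sum_negf)
qed

lemma diff_op_cong_b:
  assumes "\<And>j. j \<in> J \<Longrightarrow> b j = b' j"
  shows "diff_op J f a b = diff_op J f a b'"
proof -
  have "\<And>A. A \<in> Pow J \<Longrightarrow> repl A a b = repl A a b'"
    using assms by (auto simp: repl_def fun_eq_iff)
  then show ?thesis unfolding diff_op_def by (intro sum.cong) auto
qed

context L3 begin

lemma g_upd: "i \<in> K \<Longrightarrow> g K (x(i := v)) = g K x"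
proof -
  assume "i \<in> K"
  then have e: "repl K (x(i := v)) w = repl K x w" for w
    by (auto simp: repl_def fun_eq_iff)
  show ?thesis by (rule ext) (simp add: g_def e)
qed

lemma hdiff_upd: "i \<in> K \<Longrightarrow> hdiff M K f (x(i := v)) = hdiff M K f x"
  by (simp add: hdiff_eq g_upd)

lemma g_split:
  assumes "finite J" "i \<notin> J"
  shows "g (insert i J) x (z(i := (u, y))) = g J (x(i := u)) z - g J (x(i := y)) z"
proof -
  let ?a = "repl (insert i J) x (\<lambda>j. fst ((z(i := (u, y))) j))"
  let ?b = "\<lambda>j. snd ((z(i := (u, y))) j)"
  have a1: "?a = repl J (x(i := u)) (\<lambda>j. fst (z j))"
    using assms by (auto simp: repl_def fun_eq_iff)
  have a2: "?a(i := ?b i) = repl J (x(i := y)) (\<lambda>j. fst (z j))"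
    using assms by (auto simp: repl_def fun_eq_iff)
  have "g (insert i J) x (z(i := (u, y))) = diff_op J f ?a ?b - diff_op J f (?a(i := ?b i)) ?b"
    unfolding g_def by (rule diff_op_insert[OF assms])
  also have "\<dots> = diff_op J f ?a (\<lambda>j. snd (z j)) - diff_op J f (?a(i := ?b i)) (\<lambda>j. snd (z j))"
    using assms by (intro arg_cong2[where f="(-)"] diff_op_cong_b) auto
  also have "\<dots> = g J (x(i := u)) z - g J (x(i := y)) z"
    unfolding a2 unfolding a1 g_def ..
  finally show ?thesis .
qed

end


context L3 begin

context
  fixes i assumes i: "i < n"
begin

abbreviation "tsw \<equiv> (\<lambda>j. if j = i then n else if j = n then i else j)"
abbreviation "sgm \<equiv> (\<lambda>w. \<lambda>j\<in>{..<Suc n}. w (tsw j))"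
abbreviation "kappa \<equiv> (\<lambda>w. (\<lambda>j\<in>{..<n}. w j, w n))"

lemma sigma_meas: "sgm \<in> Pp i \<rightarrow>\<^sub>M Pp i"
proof -
  have "sgm \<in> Pp i \<rightarrow>\<^sub>M PiM {..<Suc n} (\<lambda>j. Mp i (tsw j))"
    by (rule measurable_restrict, rule measurable_component_singleton) (use i in auto)
  moreover have "PiM {..<Suc n} (\<lambda>j. Mp i (tsw j)) = Pp i"
    using i by (intro PiM_cong) (auto simp: Mp_def)
  ultimately show ?thesis by simp
qed

lemma sigma_distr: "distr (Pp i) (Pp i) sgm = Pp i"
proof -
  have "distr (Pp i) (PiM {..<Suc n} (\<lambda>j. Mp i (tsw j))) sgm = PiM {..<Suc n} (\<lambda>j. Mp i (tsw j))"
    using probMp[OF i] i by (intro distr_PiM_reindex[where f="tsw"]) (auto simp: inj_on_def)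
  moreover have "PiM {..<Suc n} (\<lambda>j. Mp i (tsw j)) = Pp i"
    using i by (intro PiM_cong) (auto simp: Mp_def)
  ultimately show ?thesis by simp
qed

lemma kappa_meas: "kappa \<in> Pp i \<rightarrow>\<^sub>M P \<Otimes>\<^sub>M M i"
proof (rule measurable_Pair)
  have "(\<lambda>w. \<lambda>j\<in>{..<n}. w j) \<in> Pp i \<rightarrow>\<^sub>M PiM {..<n} (Mp i)"
    by (rule measurable_restrict, rule measurable_component_singleton) auto
  then show "(\<lambda>w. \<lambda>j\<in>{..<n}. w j) \<in> Pp i \<rightarrow>\<^sub>M P" by (simp add: PiM_Mp[OF i])
  have "(\<lambda>w. w n) \<in> Pp i \<rightarrow>\<^sub>M Mp i n"
    by (rule measurable_component_singleton) auto
  then show "(\<lambda>w. w n) \<in> Pp i \<rightarrow>\<^sub>M M i" by (simp add: Mp_def)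
qed

lemma kappa_distr: "distr (Pp i) (P \<Otimes>\<^sub>M M i) kappa = P \<Otimes>\<^sub>M M i"
proof -
  have "distr (Pp i) (P \<Otimes>\<^sub>M M i) kappa = distr (distr (P \<Otimes>\<^sub>M M i) (Pp i) (\<lambda>(x, y). x(n := y))) (P \<Otimes>\<^sub>M M i) kappa"
    by (simp add: iota_distr[OF i])
  also have "\<dots> = distr (P \<Otimes>\<^sub>M M i) (P \<Otimes>\<^sub>M M i) (kappa \<circ> (\<lambda>(x, y). x(n := y)))"
    by (rule distr_distr[OF kappa_meas iota_meas[OF i]])
  also have "\<dots> = distr (P \<Otimes>\<^sub>M M i) (P \<Otimes>\<^sub>M M i) (\<lambda>x. x)"
  proof (rule distr_cong)
    fix p assume "p \<in> space (P \<Otimes>\<^sub>M M i)"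
    then obtain x y where p: "p = (x, y)" and x: "x \<in> space P"
      by (auto simp: space_pair_measure)
    have ex: "x \<in> extensional {..<n}" using x by (simp add: space_PiM PiE_iff)
    have e: "(\<lambda>j\<in>{..<n}. (x(n := y)) j) = x"
    proof
      fix j show "(\<lambda>j\<in>{..<n}. (x(n := y)) j) j = x j"
        using ex by (cases "j < n") (auto simp: extensional_def)
    qed
    show "(kappa \<circ> (\<lambda>(x, y). x(n := y))) p = p"
      unfolding p comp_def case_prod_conv by (simp only: e fun_upd_same)
  qed auto
  finally show ?thesis by simp
qed

lemma theta_meas: "(\<lambda>(x, u). (x(i := u), x i)) \<in> P \<Otimes>\<^sub>M M i \<rightarrow>\<^sub>M P \<Otimes>\<^sub>M M i"
proof -
  have "(\<lambda>p. ((\<lambda>(x, y). x(i := y)) p, fst p i)) \<in> P \<Otimes>\<^sub>M M i \<rightarrow>\<^sub>M P \<Otimes>\<^sub>M M i"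
  proof (rule measurable_Pair)
    show "(\<lambda>(x, y). x(i := y)) \<in> P \<Otimes>\<^sub>M M i \<rightarrow>\<^sub>M P" by (rule tau_meas[OF i])
    show "(\<lambda>p. fst p i) \<in> P \<Otimes>\<^sub>M M i \<rightarrow>\<^sub>M M i"
      using i by (intro measurable_compose[OF measurable_fst measurable_component_singleton]) auto
  qed
  then show ?thesis by (simp add: case_prod_beta')
qed

lemma theta_distr: "distr (P \<Otimes>\<^sub>M M i) (P \<Otimes>\<^sub>M M i) (\<lambda>(x, u). (x(i := u), x i)) = P \<Otimes>\<^sub>M M i"
proof -
  have "P \<Otimes>\<^sub>M M i = distr (distr (distr (P \<Otimes>\<^sub>M M i) (Pp i) (\<lambda>(x, y). x(n := y))) (Pp i) sgm) (P \<Otimes>\<^sub>M M i) kappa"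
    by (simp add: iota_distr[OF i] sigma_distr kappa_distr)
  also have "\<dots> = distr (distr (P \<Otimes>\<^sub>M M i) (Pp i) (sgm \<circ> (\<lambda>(x, y). x(n := y)))) (P \<Otimes>\<^sub>M M i) kappa"
    by (simp add: distr_distr[OF sigma_meas iota_meas[OF i]])
  also have "\<dots> = distr (P \<Otimes>\<^sub>M M i) (P \<Otimes>\<^sub>M M i) (kappa \<circ> (sgm \<circ> (\<lambda>(x, y). x(n := y))))"
    by (rule distr_distr[OF kappa_meas measurable_comp[OF iota_meas[OF i] sigma_meas]])
  also have "\<dots> = distr (P \<Otimes>\<^sub>M M i) (P \<Otimes>\<^sub>M M i) (\<lambda>(x, u). (x(i := u), x i))"
  proof (rule distr_cong)
    fix p assume "p \<in> space (P \<Otimes>\<^sub>M M i)"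
    then obtain x y where p: "p = (x, y)" and x: "x \<in> space P"
      by (auto simp: space_pair_measure)
    have ex: "x \<in> extensional {..<n}" using x by (simp add: space_PiM PiE_iff)
    have e1: "(\<lambda>j\<in>{..<n}. (\<lambda>j\<in>{..<Suc n}. (x(n := y)) (tsw j)) j) = x(i := y)"
    proof
      fix j show "(\<lambda>j\<in>{..<n}. (\<lambda>j\<in>{..<Suc n}. (x(n := y)) (tsw j)) j) j = (x(i := y)) j"
        using ex i by (cases "j < n") (auto simp: extensional_def)
    qed
    have e2: "(\<lambda>j\<in>{..<Suc n}. (x(n := y)) (tsw j)) n = x i"
      using i by simp
    show "(kappa \<circ> (sgm \<circ> (\<lambda>(x, y). x(n := y)))) p = (\<lambda>(x, u). (x(i := u), x i)) p"
      unfolding p comp_def case_prod_conv by (simp only: e1 e2)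
  qed auto
  finally show ?thesis by simp
qed

lemma theta_AE:
  assumes S: "{p \<in> space (P \<Otimes>\<^sub>M M i). R (fst p) (snd p)} \<in> sets (P \<Otimes>\<^sub>M M i)"
    and A: "AE p in P \<Otimes>\<^sub>M M i. R (fst p) (snd p)"
  shows "AE p in P \<Otimes>\<^sub>M M i. R ((fst p)(i := snd p)) (fst p i)"
proof -
  have "AE p in distr (P \<Otimes>\<^sub>M M i) (P \<Otimes>\<^sub>M M i) (\<lambda>(x, u). (x(i := u), x i)). R (fst p) (snd p)"
    unfolding theta_distr by (rule A)
  then have "AE p in P \<Otimes>\<^sub>M M i. R (fst ((\<lambda>(x, u). (x(i := u), x i)) p)) (snd ((\<lambda>(x, u). (x(i := u), x i)) p))"
    by (subst (asm) AE_distr_iff[OF theta_meas S])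
  then show ?thesis by (simp add: case_prod_beta')
qed

end
end


context L3 begin

lemma space_upd: "x \<in> space P \<Longrightarrow> i < n \<Longrightarrow> y \<in> space (M i) \<Longrightarrow> x(i := y) \<in> space P"
  by (auto simp: space_PiM PiE_iff extensional_def)

lemma hdiff_nonneg: "J \<subseteq> {..<n} \<Longrightarrow> 0 \<le> hdiff M J f x"
  unfolding hdiff_eq by (rule Linf_nonneg[OF probQ])

lemma C_route:
  assumes i: "i < n" and J: "J \<subseteq> {..<n}" and iJ: "i \<notin> J"
  shows "AE x in P. AE y in M i. AE z in Q J.
           \<bar>g (insert i J) x (z(i := (x i, y)))\<bar> \<le> hdiff M (insert i J) f x"
proof -
  define K where "K = insert i J"
  have K: "K \<subseteq> {..<n}" "i \<in> K" using i J by (auto simp: K_def)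
  define F where "F x u y z = (\<bar>g K x (z(i := (u, y)))\<bar> \<le> hdiff M K f x)" for x u y z
  define R where "R x u = (AE y in M i. AE z in Q J. F x u y z)" for x u
  have upd_meas: "(\<lambda>(p, z). z(i := p)) \<in> (M i \<Otimes>\<^sub>M M i) \<Otimes>\<^sub>M Q J \<rightarrow>\<^sub>M Q K"
  proof -
    have "(\<lambda>q. (snd q)(i := fst q)) \<in> (M i \<Otimes>\<^sub>M M i) \<Otimes>\<^sub>M Q J \<rightarrow>\<^sub>M Q K"
      by (rule measurable_fun_upd[where J=J]) (auto simp: K_def)
    then show ?thesis by (simp add: case_prod_beta')
  qed
  have D3: "distr ((M i \<Otimes>\<^sub>M M i) \<Otimes>\<^sub>M Q J) (Q K) (\<lambda>(p, z). z(i := p)) = Q K"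
    unfolding K_def using prob i J by (intro distr_pair_PiM_eq_PiM prob_space_pair) auto
  interpret Mi: prob_space "M i" using prob i .
  interpret MM: pair_sigma_finite "M i" "M i"
    by (simp add: pair_sigma_finite_def sfMi[OF i])
  interpret MMQ: pair_sigma_finite "M i \<Otimes>\<^sub>M M i" "Q J"
    by (simp add: pair_sigma_finite_def sfQ[OF J] prob_space_imp_sigma_finite prob_space_pair Mi.prob_space_axioms)
  interpret PM: pair_sigma_finite P "M i"
    by (simp add: pair_sigma_finite_def sfP sfMi[OF i])
  have st1: "AE x in P. AE u in M i. R x u"
    using good_AE[OF K(1)] AE_space
  proof eventually_elim
    case (elim x)
    have gm: "(\<lambda>w. ereal \<bar>g K x w\<bar>) \<in> borel_measurable (Q K)"
      using g_meas_x[OF K(1) elim(2)] by measurable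
    have A1: "AE w in Q K. \<bar>g K x w\<bar> \<le> hdiff M K f x"
      unfolding hdiff_eq by (rule Linf_AE[OF probQ[OF K(1)] gm elim(1)])
    have "AE q in distr ((M i \<Otimes>\<^sub>M M i) \<Otimes>\<^sub>M Q J) (Q K) (\<lambda>(p, z). z(i := p)). \<bar>g K x q\<bar> \<le> hdiff M K f x"
      unfolding D3 by (rule A1)
    then have "AE q in (M i \<Otimes>\<^sub>M M i) \<Otimes>\<^sub>M Q J. \<bar>g K x ((\<lambda>(p, z). z(i := p)) q)\<bar> \<le> hdiff M K f x"
      by (rule AE_distrD[OF upd_meas])
    then have "AE p in M i \<Otimes>\<^sub>M M i. AE z in Q J. \<bar>g K x (z(i := p))\<bar> \<le> hdiff M K f x"
      by (rule MMQ.AE_pair[where Q="\<lambda>q. \<bar>g K x ((\<lambda>(p, z). z(i := p)) q)\<bar> \<le> hdiff M K f x", unfolded case_prod_conv])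
    then have "AE u in M i. AE y in M i. AE z in Q J. \<bar>g K x (z(i := (u, y)))\<bar> \<le> hdiff M K f x"
      by (rule MM.AE_pair)
    then show ?case unfolding R_def F_def .
  qed
  have m_meas: "(\<lambda>r. (fst (fst (fst r)), (snd r)(i := (snd (fst (fst r)), snd (fst r)))))
      \<in> ((P \<Otimes>\<^sub>M M i) \<Otimes>\<^sub>M M i) \<Otimes>\<^sub>M Q J \<rightarrow>\<^sub>M P \<Otimes>\<^sub>M Q K"
  proof (rule measurable_Pair)
    show "(\<lambda>r. fst (fst (fst r))) \<in> ((P \<Otimes>\<^sub>M M i) \<Otimes>\<^sub>M M i) \<Otimes>\<^sub>M Q J \<rightarrow>\<^sub>M P" by measurable
    show "(\<lambda>r. (snd r)(i := (snd (fst (fst r)), snd (fst r)))) \<in> ((P \<Otimes>\<^sub>M M i) \<Otimes>\<^sub>M M i) \<Otimes>\<^sub>M Q J \<rightarrow>\<^sub>M Q K"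
      by (rule measurable_fun_upd[where J=J]) (auto simp: K_def)
  qed
  have gmm[measurable]: "(\<lambda>r. g K (fst (fst (fst r))) ((snd r)(i := (snd (fst (fst r)), snd (fst r)))))
      \<in> borel_measurable (((P \<Otimes>\<^sub>M M i) \<Otimes>\<^sub>M M i) \<Otimes>\<^sub>M Q J)"
    using measurable_compose[OF m_meas g_meas[OF K(1)]] by simp
  have hmm[measurable]: "(\<lambda>r. hdiff M K f (fst (fst (fst r)))) \<in> borel_measurable (((P \<Otimes>\<^sub>M M i) \<Otimes>\<^sub>M M i) \<Otimes>\<^sub>M Q J)"
    using measurable_compose[OF _ hdiff_meas[OF K(1)], of "\<lambda>r. fst (fst (fst r))"] by measurable
  have S1: "{r \<in> space (((P \<Otimes>\<^sub>M M i) \<Otimes>\<^sub>M M i) \<Otimes>\<^sub>M Q J). F (fst (fst (fst r))) (snd (fst (fst r))) (snd (fst r)) (snd r)}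
       \<in> sets (((P \<Otimes>\<^sub>M M i) \<Otimes>\<^sub>M M i) \<Otimes>\<^sub>M Q J)"
    unfolding F_def by measurable
  have S2: "{q \<in> space ((P \<Otimes>\<^sub>M M i) \<Otimes>\<^sub>M M i). AE z in Q J. F (fst (fst q)) (snd (fst q)) (snd q) z} \<in> sets ((P \<Otimes>\<^sub>M M i) \<Otimes>\<^sub>M M i)"
    by (rule sets_AE[OF sfQ[OF J] S1])
  have S3: "{p \<in> space (P \<Otimes>\<^sub>M M i). R (fst p) (snd p)} \<in> sets (P \<Otimes>\<^sub>M M i)"
    unfolding R_def by (rule sets_AE[OF sfMi[OF i] S2])
  have st3: "AE p in P \<Otimes>\<^sub>M M i. R (fst p) (snd p)"
    by (rule PM.AE_pair_measure[OF S3]) (simp add: st1)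
  have Rinv: "R (x(i := v)) u = R x u" for x v u
    unfolding R_def F_def using K(2) by (simp add: g_upd hdiff_upd)
  have "AE p in P \<Otimes>\<^sub>M M i. R ((fst p)(i := snd p)) (fst p i)"
    by (rule theta_AE[OF i S3 st3])
  then have "AE p in P \<Otimes>\<^sub>M M i. R (fst p) (fst p i)"
    by (simp add: Rinv)
  then have "AE x in P. AE u in M i. R (fst (x, u)) (fst (x, u) i)"
    by (rule PM.AE_pair)
  then have "AE x in P. AE u in M i. R x (x i)" by simp
  then have "AE x in P. R x (x i)" by simp
  then show ?thesis unfolding R_def F_def K_def .
qed

lemma K_lemma:
  assumes i: "i < n" and J: "J \<subseteq> {..<n}" and iJ: "i \<notin> J"
  shows "AE x in P. AE y in M i. hdiff M J f x \<le> hdiff M J f (x(i := y)) + hdiff M (insert i J) f x"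
proof -
  interpret PM: pair_sigma_finite P "M i"
    by (simp add: pair_sigma_finite_def sfP sfMi[OF i])
  have "AE x in distr (P \<Otimes>\<^sub>M M i) P (\<lambda>(x, y). x(i := y)). AE z in Q J. \<bar>g J x z\<bar> \<le> 2 ^ card J * C"
    unfolding D2[OF i] by (rule good_AE[OF J])
  then have "AE p in P \<Otimes>\<^sub>M M i. AE z in Q J. \<bar>g J ((\<lambda>(x, y). x(i := y)) p) z\<bar> \<le> 2 ^ card J * C"
    by (rule AE_distrD[OF tau_meas[OF i]])
  then have a: "AE x in P. AE y in M i. AE z in Q J. \<bar>g J (x(i := y)) z\<bar> \<le> 2 ^ card J * C"
    by (rule PM.AE_pair[where Q="\<lambda>p. AE z in Q J. \<bar>g J ((\<lambda>(x, y). x(i := y)) p) z\<bar> \<le> 2 ^ card J * C", unfolded case_prod_conv])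
  show ?thesis
    using a C_route[OF i J iJ] AE_space
  proof eventually_elim
    case (elim x)
    note X = elim
    show ?case
      using X(1) X(2) AE_space
    proof eventually_elim
      case (elim y)
      have xy: "x(i := y) \<in> space P" using space_upd[OF X(3) i elim(3)] .
      have gm: "(\<lambda>w. ereal \<bar>g J (x(i := y)) w\<bar>) \<in> borel_measurable (Q J)"
        using g_meas_x[OF J xy] by measurable
      have A1: "AE z in Q J. \<bar>g J (x(i := y)) z\<bar> \<le> hdiff M J f (x(i := y))"
        unfolding hdiff_eq by (rule Linf_AE[OF probQ[OF J] gm elim(1)])
      have "AE z in Q J. \<bar>g J x z\<bar> \<le> hdiff M J f (x(i := y)) + hdiff M (insert i J) f x"
        using A1 elim(2)
      proof eventually_elim
        case (elim z)
        have "g (insert i J) x (z(i := (x i, y))) = g J (x(i := x i)) z - g J (x(i := y)) z"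
          by (rule g_split[OF finJ[OF J] iJ])
        then have "g J x z = g J (x(i := y)) z + g (insert i J) x (z(i := (x i, y)))" by simp
        then show ?case using elim by linarith
      qed
      then show ?case unfolding hdiff_eq[of J x]
        by (rule Linf_le[rotated]) (intro add_nonneg_nonneg hdiff_nonneg, use J i in auto)
    qed
  qed
qed

end


definition Sop :: "nat \<Rightarrow> nat \<Rightarrow> (nat \<Rightarrow> nat \<Rightarrow> real) \<Rightarrow> ((nat \<Rightarrow> nat) \<Rightarrow> real) \<Rightarrow> real" where
  "Sop n k v A = (\<Sum>\<iota>\<in>PiE {..<k} (\<lambda>_. {..<n}). (\<Prod>j<k. v j (\<iota> j)) * A \<iota>)"

definition Vset :: "nat \<Rightarrow> nat \<Rightarrow> (nat \<Rightarrow> nat \<Rightarrow> real) set" where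
  "Vset n k = {v. \<forall>j<k. (\<Sum>i<n. (v j i)\<^sup>2) \<le> 1}"

lemma opnorm_eq: "opnorm n k A = Sup ((\<lambda>v. Sop n k v A) ` Vset n k)"
  unfolding opnorm_def Sop_def Vset_def by (rule arg_cong[where f=Sup]) auto

lemma Vset_abs: "v \<in> Vset n k \<Longrightarrow> j < k \<Longrightarrow> i < n \<Longrightarrow> \<bar>v j i\<bar> \<le> 1"
proof -
  assume v: "v \<in> Vset n k" and j: "j < k" and i: "i < n"
  have "(v j i)\<^sup>2 \<le> (\<Sum>i<n. (v j i)\<^sup>2)"
    using i by (intro member_le_sum) auto
  also have "\<dots> \<le> 1" using v j by (auto simp: Vset_def)
  finally show ?thesis by (simp add: abs_square_le_1)
qed

lemma Sop_bound: "v \<in> Vset n k \<Longrightarrow> Sop n k v A \<le> (\<Sum>\<iota>\<in>PiE {..<k} (\<lambda>_. {..<n}). \<bar>A \<iota>\<bar>)"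
proof -
  assume v: "v \<in> Vset n k"
  have "Sop n k v A \<le> (\<Sum>\<iota>\<in>PiE {..<k} (\<lambda>_. {..<n}). \<bar>(\<Prod>j<k. v j (\<iota> j)) * A \<iota>\<bar>)"
    unfolding Sop_def by (rule sum_mono) simp
  also have "\<dots> \<le> (\<Sum>\<iota>\<in>PiE {..<k} (\<lambda>_. {..<n}). \<bar>A \<iota>\<bar>)"
  proof (rule sum_mono)
    fix \<iota> assume \<iota>: "\<iota> \<in> PiE {..<k} (\<lambda>_. {..<n})"
    have "\<bar>\<Prod>j<k. v j (\<iota> j)\<bar> \<le> 1"
      unfolding abs_prod using \<iota> v by (intro prod_le_1) (auto simp: Vset_abs PiE_iff)
    then show "\<bar>(\<Prod>j<k. v j (\<iota> j)) * A \<iota>\<bar> \<le> \<bar>A \<iota>\<bar>"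
      by (simp add: abs_mult mult_left_le_one_le)
  qed
  finally show ?thesis .
qed

lemma Vset_ne: "(\<lambda>_ _. 0) \<in> Vset n k" by (simp add: Vset_def)

lemma Sop_bdd: "bdd_above ((\<lambda>v. Sop n k v A) ` Vset n k)"
  by (rule bdd_aboveI2[where M="\<Sum>\<iota>\<in>PiE {..<k} (\<lambda>_. {..<n}). \<bar>A \<iota>\<bar>"]) (rule Sop_bound)

lemma Sop_le_opnorm: "v \<in> Vset n k \<Longrightarrow> Sop n k v A \<le> opnorm n k A"
  unfolding opnorm_eq by (rule cSup_upper[OF imageI Sop_bdd])

lemma opnorm_approx:
  assumes "0 < e"
  obtains v where "v \<in> Vset n k" "opnorm n k A - e < Sop n k v A"
proof -
  have "opnorm n k A - e < Sup ((\<lambda>v. Sop n k v A) ` Vset n k)"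
    using assms unfolding opnorm_eq by simp
  then obtain s where "s \<in> (\<lambda>v. Sop n k v A) ` Vset n k" "opnorm n k A - e < s"
    using less_cSup_iff[OF _ Sop_bdd] Vset_ne by blast
  then show ?thesis using that by blast
qed

lemma Vset_absI: "v \<in> Vset n k \<Longrightarrow> (\<lambda>j i. \<bar>v j i\<bar>) \<in> Vset n k"
  by (simp add: Vset_def)

lemma Sop_abs:
  assumes "\<And>\<iota>. \<iota> \<in> PiE {..<k} (\<lambda>_. {..<n}) \<Longrightarrow> 0 \<le> A \<iota>"
  shows "Sop n k v A \<le> Sop n k (\<lambda>j i. \<bar>v j i\<bar>) A"
  unfolding Sop_def
proof (rule sum_mono)
  fix \<iota> assume "\<iota> \<in> PiE {..<k} (\<lambda>_. {..<n})"
  then have A: "0 \<le> A \<iota>" by (rule assms)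
  have "(\<Prod>j<k. v j (\<iota> j)) \<le> (\<Prod>j<k. \<bar>v j (\<iota> j)\<bar>)"
    by (metis abs_ge_self abs_prod)
  then show "(\<Prod>j<k. v j (\<iota> j)) * A \<iota> \<le> (\<Prod>j<k. \<bar>v j (\<iota> j)\<bar>) * A \<iota>"
    using A by (rule mult_right_mono)
qed

lemma L2c:
  fixes A :: "(nat \<Rightarrow> nat) \<Rightarrow> real" and w :: "nat \<Rightarrow> nat \<Rightarrow> real"
  assumes w: "w \<in> Vset n k"
  defines "c \<equiv> (\<lambda>i. \<Sum>\<iota>\<in>PiE {..<k} (\<lambda>_. {..<n}). (\<Prod>j<k. w j (\<iota> j)) * A (\<iota>(k := i)))"
  shows "L2_set c {..<n} \<le> opnorm n (Suc k) A"
proof (cases "L2_set c {..<n} = 0")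
  case True
  have "Sop n (Suc k) (\<lambda>_ _. 0) A = 0" by (simp add: Sop_def)
  then show ?thesis using Sop_le_opnorm[OF Vset_ne, of n "Suc k" A] True by simp
next
  case False
  define L where "L = L2_set c {..<n}"
  have Lpos: "0 < L" using False L2_set_nonneg[of c "{..<n}"] unfolding L_def by linarith
  have L2: "L\<^sup>2 = (\<Sum>i<n. (c i)\<^sup>2)"
    unfolding L_def L2_set_def by (simp add: sum_nonneg)
  define V where "V j = (if j = k then (\<lambda>i. c i / L) else w j)" for j
  have V: "V \<in> Vset n (Suc k)"
  proof -
    have "(\<Sum>i<n. (c i / L)\<^sup>2) = (\<Sum>i<n. (c i)\<^sup>2) / L\<^sup>2"
      by (simp add: power_divide sum_divide_distrib)
    also have "\<dots> = 1"
    proof -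
      have "L\<^sup>2 \<noteq> 0" using Lpos by simp
      then show ?thesis unfolding L2[symmetric] by simp
    qed
    finally show ?thesis using w by (auto simp: Vset_def V_def less_Suc_eq)
  qed
  have "Sop n (Suc k) V A = (\<Sum>\<kappa>\<in>PiE (insert k {..<k}) (\<lambda>_. {..<n}). (\<Prod>j<Suc k. V j (\<kappa> j)) * A \<kappa>)"
    unfolding Sop_def lessThan_Suc ..
  also have "\<dots> = (\<Sum>p\<in>{..<n} \<times> PiE {..<k} (\<lambda>_. {..<n}). (\<Prod>j<Suc k. V j (((snd p)(k := fst p)) j)) * A ((snd p)(k := fst p)))"
    unfolding PiE_insert_eq
    by (subst sum.reindex[OF inj_combinator]) (auto simp: case_prod_beta')
  also have "\<dots> = (\<Sum>p\<in>{..<n} \<times> PiE {..<k} (\<lambda>_. {..<n}). (c (fst p) / L) * ((\<Prod>j<k. w j (snd p j)) * A ((snd p)(k := fst p))))"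
  proof (intro sum.cong refl)
    fix p :: "nat \<times> (nat \<Rightarrow> nat)"
    obtain i \<iota> where p: "p = (i, \<iota>)" by (cases p)
    have "(\<Prod>j<Suc k. V j ((\<iota>(k := i)) j)) = V k i * (\<Prod>j<k. V j ((\<iota>(k := i)) j))"
      by (simp add: prod.lessThan_Suc)
    also have "(\<Prod>j<k. V j ((\<iota>(k := i)) j)) = (\<Prod>j<k. w j (\<iota> j))"
      by (intro prod.cong) (auto simp: V_def)
    finally show "(\<Prod>j<Suc k. V j (((snd p)(k := fst p)) j)) * A ((snd p)(k := fst p))
        = c (fst p) / L * ((\<Prod>j<k. w j (snd p j)) * A ((snd p)(k := fst p)))"
      by (simp add: V_def p)
  qed
  also have "\<dots> = (\<Sum>i<n. \<Sum>\<iota>\<in>PiE {..<k} (\<lambda>_. {..<n}). (c i / L) * ((\<Prod>j<k. w j (\<iota> j)) * A (\<iota>(k := i))))"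
    by (simp add: sum.cartesian_product case_prod_beta')
  also have "\<dots> = (\<Sum>i<n. (c i / L) * c i)"
    unfolding c_def by (simp add: sum_distrib_left)
  also have "\<dots> = (\<Sum>i<n. (c i)\<^sup>2) / L"
    by (simp add: sum_divide_distrib power2_eq_square)
  also have "\<dots> = L" unfolding L2[symmetric] using Lpos by (simp add: power2_eq_square)
  finally show ?thesis using Sop_le_opnorm[OF V, of A] unfolding L_def by simp
qed



context L3 begin

lemma htensor_nonneg: "\<iota> \<in> PiE {..<k} (\<lambda>_. {..<n}) \<Longrightarrow> 0 \<le> htensor M k f x \<iota>"
  unfolding htensor_def by (auto intro!: hdiff_nonneg simp: PiE_iff)

lemma termwise:
  assumes \<iota>: "\<iota> \<in> PiE {..<k} (\<lambda>_. {..<n})" and i: "i < n"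
    and H: "inj_on \<iota> {..<k} \<and> i \<notin> \<iota> ` {..<k} \<longrightarrow>
       hdiff M (\<iota> ` {..<k}) f x \<le> hdiff M (\<iota> ` {..<k}) f (x(i := y)) + hdiff M (insert i (\<iota> ` {..<k})) f x"
  shows "htensor M k f x \<iota> - htensor M k f (x(i := y)) \<iota> \<le> htensor M (Suc k) f x (\<iota>(k := i))"
proof -
  have \<iota>': "\<iota>(k := i) \<in> PiE {..<Suc k} (\<lambda>_. {..<n})"
    using \<iota> i by (auto simp: PiE_iff extensional_def)
  have nn: "0 \<le> htensor M (Suc k) f x (\<iota>(k := i))" by (rule htensor_nonneg[OF \<iota>'])
  show ?thesis
  proof (cases "inj_on \<iota> {..<k}")
    case False
    then show ?thesis using nn by (simp add: htensor_def)
  next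
    case True
    show ?thesis
    proof (cases "i \<in> \<iota> ` {..<k}")
      case True2: True
      then show ?thesis using nn True by (simp add: htensor_def hdiff_upd)
    next
      case False2: False
      have inj: "inj_on (\<iota>(k := i)) {..<Suc k}"
        using True False2 by (auto simp: inj_on_def less_Suc_eq)
      have img: "(\<iota>(k := i)) ` {..<Suc k} = insert i (\<iota> ` {..<k})"
        by (auto simp: lessThan_Suc image_def)
      show ?thesis using H True False2 inj img by (simp add: htensor_def)
    qed
  qed
qed

lemma pointwise:
  assumes x: "x \<in> space P"
    and H: "\<forall>\<iota>\<in>PiE {..<k} (\<lambda>_. {..<n}). \<forall>i\<in>{..<n}. inj_on \<iota> {..<k} \<and> i \<notin> \<iota> ` {..<k} \<longrightarrow>
       (AE y in M i. hdiff M (\<iota> ` {..<k}) f x \<le> hdiff M (\<iota> ` {..<k}) f (x(i := y)) + hdiff M (insert i (\<iota> ` {..<k})) f x)"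
  shows "hplus_norm M n (\<lambda>z. opnorm n k (htensor M k f z)) x \<le> opnorm n (Suc k) (htensor M (Suc k) f x)"
proof (rule field_le_epsilon)
  fix e0 :: real assume e0: "0 < e0"
  define e where "e = e0 / (sqrt n + 1)"
  have sp: "0 < sqrt n + 1" by (simp add: add_nonneg_pos)
  have e: "0 < e" using e0 sp by (simp add: e_def)
  have se: "sqrt n * e \<le> e0"
  proof -
    have "sqrt n * e \<le> (sqrt n + 1) * e" using e by simp
    also have "\<dots> = e0" unfolding e_def using sp by simp
    finally show ?thesis .
  qed
  define G where "G z = opnorm n k (htensor M k f z)" for z
  define PI where "PI = PiE {..<k} (\<lambda>_. {..<n})"
  obtain v where v: "v \<in> Vset n k" and vG: "G x - e < Sop n k v (htensor M k f x)"
    using opnorm_approx[OF e] unfolding G_def by blast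
  define w where "w = (\<lambda>j i. \<bar>v j i\<bar>)"
  have w: "w \<in> Vset n k" unfolding w_def by (rule Vset_absI[OF v])
  have wG: "G x - e < Sop n k w (htensor M k f x)"
    using vG Sop_abs[of k n "htensor M k f x" v] htensor_nonneg unfolding w_def by fastforce
  define c where "c i = (\<Sum>\<iota>\<in>PI. (\<Prod>j<k. w j (\<iota> j)) * htensor M (Suc k) f x (\<iota>(k := i)))" for i
  have wnn: "0 \<le> (\<Prod>j<k. w j (\<iota> j))" for \<iota> by (simp add: w_def prod_nonneg)
  have cnn: "0 \<le> c i" if "i < n" for i
    unfolding c_def
  proof (intro sum_nonneg mult_nonneg_nonneg wnn htensor_nonneg)
    fix \<iota> assume "\<iota> \<in> PI" then show "\<iota>(k := i) \<in> PiE {..<Suc k} (\<lambda>_. {..<n})"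
      using that by (auto simp: PI_def PiE_iff extensional_def)
  qed
  have hp: "hplus M i G x \<le> c i + e" if i: "i < n" for i
    unfolding hplus_def
  proof (rule Linf_le)
    show "0 \<le> c i + e" using cnn[OF i] e by simp
    have "AE y in M i. \<forall>\<iota>\<in>PI. inj_on \<iota> {..<k} \<and> i \<notin> \<iota> ` {..<k} \<longrightarrow>
       hdiff M (\<iota> ` {..<k}) f x \<le> hdiff M (\<iota> ` {..<k}) f (x(i := y)) + hdiff M (insert i (\<iota> ` {..<k})) f x"
    proof (rule AE_finite_allI)
      show "finite PI" unfolding PI_def by (simp add: finite_PiE)
      fix \<iota> assume "\<iota> \<in> PI"
      then have "inj_on \<iota> {..<k} \<and> i \<notin> \<iota> ` {..<k} \<longrightarrow>
       (AE y in M i. hdiff M (\<iota> ` {..<k}) f x \<le> hdiff M (\<iota> ` {..<k}) f (x(i := y)) + hdiff M (insert i (\<iota> ` {..<k})) f x)"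
        using H i unfolding PI_def by auto
      then show "AE y in M i. inj_on \<iota> {..<k} \<and> i \<notin> \<iota> ` {..<k} \<longrightarrow>
       hdiff M (\<iota> ` {..<k}) f x \<le> hdiff M (\<iota> ` {..<k}) f (x(i := y)) + hdiff M (insert i (\<iota> ` {..<k})) f x"
        by (cases "inj_on \<iota> {..<k} \<and> i \<notin> \<iota> ` {..<k}") auto
    qed
    then show "AE y in M i. \<bar>max 0 (G x - G (x(i := y)))\<bar> \<le> c i + e"
    proof eventually_elim
      case (elim y)
      have "Sop n k w (htensor M k f (x(i := y))) \<le> G (x(i := y))"
        unfolding G_def by (rule Sop_le_opnorm[OF w])
      moreover have "Sop n k w (htensor M k f x) - Sop n k w (htensor M k f (x(i := y))) \<le> c i"
      proof -
        have "Sop n k w (htensor M k f x) - Sop n k w (htensor M k f (x(i := y)))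
            = (\<Sum>\<iota>\<in>PI. (\<Prod>j<k. w j (\<iota> j)) * (htensor M k f x \<iota> - htensor M k f (x(i := y)) \<iota>))"
          unfolding Sop_def PI_def by (simp add: sum_subtractf right_diff_distrib)
        also have "\<dots> \<le> c i"
          unfolding c_def
        proof (rule sum_mono)
          fix \<iota> assume \<iota>: "\<iota> \<in> PI"
          have "htensor M k f x \<iota> - htensor M k f (x(i := y)) \<iota> \<le> htensor M (Suc k) f x (\<iota>(k := i))"
            using termwise[of \<iota> k i x y] \<iota> elim i unfolding PI_def by auto
          then show "(\<Prod>j<k. w j (\<iota> j)) * (htensor M k f x \<iota> - htensor M k f (x(i := y)) \<iota>)
              \<le> (\<Prod>j<k. w j (\<iota> j)) * htensor M (Suc k) f x (\<iota>(k := i))"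
            by (rule mult_left_mono[OF _ wnn])
        qed
        finally show ?thesis .
      qed
      ultimately have "G x - G (x(i := y)) \<le> c i + e" using wG by linarith
      then show ?case using cnn[OF i] e by simp
    qed
  qed
  have hpnn: "0 \<le> hplus M i G x" if "i < n" for i
    unfolding hplus_def by (rule Linf_nonneg[OF prob[OF that]])
  have "hplus_norm M n G x = sqrt (\<Sum>i<n. (hplus M i G x)\<^sup>2)" by (simp add: hplus_norm_def)
  also have "\<dots> \<le> sqrt (\<Sum>i<n. (c i + e)\<^sup>2)"
    using hp hpnn by (intro real_sqrt_le_mono sum_mono power_mono) auto
  also have "\<dots> = L2_set (\<lambda>i. c i + e) {..<n}" by (simp add: L2_set_def)
  also have "\<dots> \<le> L2_set c {..<n} + L2_set (\<lambda>_. e) {..<n}" by (rule L2_set_triangle_ineq)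
  also have "L2_set (\<lambda>_. e) {..<n} = sqrt n * e"
    using e by (simp add: L2_set_def real_sqrt_mult)
  also have "L2_set c {..<n} \<le> opnorm n (Suc k) (htensor M (Suc k) f x)"
    using L2c[OF w, of "htensor M (Suc k) f x"] unfolding c_def PI_def by simp
  finally show "hplus_norm M n (\<lambda>z. opnorm n k (htensor M k f z)) x \<le> opnorm n (Suc k) (htensor M (Suc k) f x) + e0"
    using se unfolding G_def by linarith
qed

end


theorem lemma3p2:
  fixes M :: "nat \<Rightarrow> 'a measure" and n d :: nat and f :: "(nat \<Rightarrow> 'a) \<Rightarrow> real"
  assumes "\<And>i. i < n \<Longrightarrow> prob_space (M i)"
    and "f \<in> borel_measurable (PiM {..<n} M)"
    and "\<exists>C. AE x in PiM {..<n} M. \<bar>f x\<bar> \<le> C"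
    and "2 \<le> d"
  shows "AE x in PiM {..<n} M.
           hplus_norm M n (\<lambda>z. opnorm n (d - 1) (htensor M (d - 1) f z)) x
             \<le> opnorm n d (htensor M d f x)"
proof -
  obtain C where C: "AE x in PiM {..<n} M. \<bar>f x\<bar> \<le> C" using assms(3) by blast
  have C': "AE x in PiM {..<n} M. \<bar>f x\<bar> \<le> max C 0"
    using C by eventually_elim (simp add: le_max_iff_disj)
  interpret L3 M n f "max C 0"
    by (rule L3.intro) (use assms(1,2) C' in simp_all)
  define k where "k = d - 1"
  have d: "d = Suc k" using assms(4) unfolding k_def by simp
  have H: "AE x in P. \<forall>\<iota>\<in>PiE {..<k} (\<lambda>_. {..<n}). \<forall>i\<in>{..<n}. inj_on \<iota> {..<k} \<and> i \<notin> \<iota> ` {..<k} \<longrightarrow>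
       (AE y in M i. hdiff M (\<iota> ` {..<k}) f x \<le> hdiff M (\<iota> ` {..<k}) f (x(i := y)) + hdiff M (insert i (\<iota> ` {..<k})) f x)"
  proof (intro AE_finite_allI)
    show "finite (PiE {..<k} (\<lambda>_. {..<n}))" by (simp add: finite_PiE)
    show "finite {..<n}" by simp
    fix \<iota> i assume \<iota>: "\<iota> \<in> PiE {..<k} (\<lambda>_. {..<n})" and i: "i \<in> {..<n}"
    show "AE x in P. inj_on \<iota> {..<k} \<and> i \<notin> \<iota> ` {..<k} \<longrightarrow>
       (AE y in M i. hdiff M (\<iota> ` {..<k}) f x \<le> hdiff M (\<iota> ` {..<k}) f (x(i := y)) + hdiff M (insert i (\<iota> ` {..<k})) f x)"
    proof (cases "inj_on \<iota> {..<k} \<and> i \<notin> \<iota> ` {..<k}")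
      case True
      have J: "\<iota> ` {..<k} \<subseteq> {..<n}" using \<iota> by (auto simp: PiE_iff)
      have "AE x in P. AE y in M i. hdiff M (\<iota> ` {..<k}) f x \<le> hdiff M (\<iota> ` {..<k}) f (x(i := y)) + hdiff M (insert i (\<iota> ` {..<k})) f x"
        using i J True by (intro K_lemma) auto
      then show ?thesis by eventually_elim (use True in simp)
    next
      case False
      show ?thesis by (rule AE_I2) (use False in blast)
    qed
  qed
  show ?thesis
    using H AE_space unfolding d
  proof eventually_elim
    case (elim x)
    show ?case using pointwise[OF elim(2) elim(1)] by simp
  qed
qed


end
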